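(* Let $\mathcal{E}\subseteq[5]\times[5]$ be the erasure pattern $$\mathcal{E}=\{(1,2),(1,3),(1,4),(1,5),(2,1),(2,2),(2,3),(3,1),(3,2),(3,3),(4,1),(4,4),(4,5),(5,1),(5,4),(5,5)\},$$ i.e., as a $5\times 5$ array (row $i$, column $j$) with $\star$ marking erasures: row 1: $0\,\star\,\star\,\star\,\star$; rows 2 and 3: $\star\,\star\,\star\,0\,0$; rows 4 and 5: $\star\,0\,0\,\star\,\star$. Then $\mathcal{E}$ is regular for $T_{5\times5}(2,2,0)$, and $\mathcal{E}$ is not correctable in the topology $T_{5\times 5}(2,2,0)$.
   Context: Positions of vectors in $\mathbb{F}^{mn}$ are identified with $[m]\times[n]$, $[k]=\{1,\dots,k\}$. For linear codes $\mathcal{C}_1\subseteq\mathbb{F}^m,\mathcal{C}_2\subseteq\mathbb{F}^n$, $\mathcal{C}_1\otimes\mathcal{C}_2$ is the row span of the Kronecker product of their generator matrices (arrays with all columns in $\mathcal{C}_1$ and all rows in $\mathcal{C}_2$). A code for the topology $T_{m\times n}(a,b,0)$ is a linear code over a finite field $\mathbb{F}$ of the form $\mathcal{C}_{\mathsf{col}}\otimes\mathcal{C}_{\mathsf{row}}$ (i.e., with parity-check matrix a parity-check matrix of $\mathcal{C}_{\mathsf{col}}\otimes\mathcal{C}_{\mathsf{row}}$), where $\mathcal{C}_{\mathsf{col}}$ is a linear $[m,\geq m-a]$ code and $\mathcal{C}_{\mathsf{row}}$ a linear $[n,\geq n-b]$ code over $\mathbb{F}$; $\mathbb{C}_{m\times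 n}(a,b,0)$ is the set of these codes (over any finite field). A code corrects an erasure pattern $\mathcal{E}$ if no two distinct codewords agree on all positions outside $\mathcal{E}$; $\mathcal{E}$ is correctable in $T_{m\times n}(a,b,0)$ if some code in $\mathbb{C}_{m\times n}(a,b,0)$ corrects it. An erasure pattern $\mathcal{E}\subseteq[m]\times[n]$ is regular (for $T_{m\times n}(a,b,0)$) if for all $\mathcal{U}\subseteq[m]$ with $|\mathcal{U}|=u\geq a$ and all $\mathcal{V}\subseteq[n]$ with $|\mathcal{V}|=v\geq b$ one has $|\mathcal{E}\cap(\mathcal{U}\times\mathcal{V})|\leq va+ub-ab$. *)

theory Defs
  imports Complex_Main "HOL-Library.Function_Algebras"
begin

text \<open>Vectors of length m over a field are functions nat => 'a, with coordinates
  indexed by [m] = {1..m}; coordinates outside [m] are zero.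
  Scalar multiplication on such functions is pointwise.\<close>

definition fscale :: "'a::field \<Rightarrow> (nat \<Rightarrow> 'a) \<Rightarrow> (nat \<Rightarrow> 'a)" where
  "fscale c x = (\<lambda>i. c * x i)"

definition lin_code :: "nat \<Rightarrow> nat \<Rightarrow> (nat \<Rightarrow> 'a::field) set \<Rightarrow> bool" where
  "lin_code m k C \<longleftrightarrow>
     C \<subseteq> {x. \<forall>i. i \<notin> {1..m} \<longrightarrow> x i = 0}
   \<and> module.subspace fscale C
   \<and> vector_space.dim fscale C \<ge> k"

text \<open>Since codewords vanish outside their index range,
  such arrays vanish outside [m] x [n].\<close>
definition tensor_code :: "(nat \<Rightarrow> 'a::field) set \<Rightarrow> (nat \<Rightarrow> 'a) set \<Rightarrow> (nat \<times> nat \<Rightarrow> 'a) set" where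
  "tensor_code C1 C2 = {X. (\<forall>j. (\<lambda>i. X (i, j)) \<in> C1) \<and> (\<forall>i. (\<lambda>j. X (i, j)) \<in> C2)}"

definition corrects :: "nat \<Rightarrow> nat \<Rightarrow> (nat \<times> nat \<Rightarrow> 'a) set \<Rightarrow> (nat \<times> nat) set \<Rightarrow> bool" where
  "corrects m n C E \<longleftrightarrow>
     (\<forall>X\<in>C. \<forall>Y\<in>C. (\<forall>p \<in> ({1..m} \<times> {1..n}) - E. X p = Y p) \<longrightarrow> X = Y)"

text \<open>E is correctable in T_{m x n}(a,b,0) over the (finite) field 'a: some code
  C_col (x) C_row with C_col a linear [m, >= m-a] code and C_row a linear [n, >= n-b]
  code over 'a corrects E.\<close>
definition correctable_over :: "'a::{field,finite} itself \<Rightarrow> nat \<Rightarrow> nat \<Rightarrow> nat \<Rightarrow> nat \<Rightarrow> (nat \<times> nat) set \<Rightarrow> bool" where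
  "correctable_over _ m n a b E \<longleftrightarrow>
     (\<exists>(Ccol :: (nat \<Rightarrow> 'a) set) Crow. lin_code m (m - a) Ccol \<and> lin_code n (n - b) Crow
        \<and> corrects m n (tensor_code Ccol Crow) E)"

definition regular :: "nat \<Rightarrow> nat \<Rightarrow> nat \<Rightarrow> nat \<Rightarrow> (nat \<times> nat) set \<Rightarrow> bool" where
  "regular m n a b E \<longleftrightarrow>
     (\<forall>U V. U \<subseteq> {1..m} \<longrightarrow> V \<subseteq> {1..n} \<longrightarrow> card U \<ge> a \<longrightarrow> card V \<ge> b \<longrightarrow>
        int (card (E \<inter> (U \<times> V))) \<le> int (card V * a + card U * b) - int (a * b))"

definition E4 :: "(nat \<times> nat) set" where
  "E4 = {(1,2),(1,3),(1,4),(1,5),(2,1),(2,2),(2,3),(3,1),(3,2),(3,3),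
         (4,1),(4,4),(4,5),(5,1),(5,4),(5,5)}"

end

theory Submission
  imports Defs
begin

lemma fscale_vs: "vector_space (fscale :: 'a::field \<Rightarrow> (nat \<Rightarrow> 'a) \<Rightarrow> _)"
  by unfold_locales (auto simp: fscale_def fun_eq_iff algebra_simps)

lemma sum_fun_apply: "finite Z \<Longrightarrow> (\<Sum>z\<in>Z. g z) (i::nat) = (\<Sum>z\<in>Z. g z i :: 'a::comm_monoid_add)"
  by (induction Z rule: finite_induct) auto

lemma vanish:
  fixes C :: "(nat \<Rightarrow> 'a::field) set"
  assumes sub: "module.subspace fscale C" and dimC: "vector_space.dim fscale C \<ge> k"
    and fin: "finite Z" and cZ: "card Z < k"
  shows "\<exists>x\<in>C. x \<noteq> 0 \<and> (\<forall>z\<in>Z. x z = 0)"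
proof (rule ccontr)
  assume H: "\<not> ?thesis"
  interpret vs: vector_space "fscale :: 'a \<Rightarrow> (nat \<Rightarrow> 'a) \<Rightarrow> _" by (rule fscale_vs)
  define f :: "(nat \<Rightarrow> 'a) \<Rightarrow> (nat \<Rightarrow> 'a)" where "f x = (\<lambda>i. if i \<in> Z then x i else 0)" for x
  have lin: "Vector_Spaces.linear fscale fscale f"
    unfolding Vector_Spaces.linear_iff using fscale_vs by (auto simp: f_def fscale_def fun_eq_iff)
  interpret lf: Vector_Spaces.linear fscale fscale f by (rule lin)
  obtain B where B: "B \<subseteq> C" "vs.independent B" "C \<subseteq> vs.span B" "card B = vs.dim C"
    using vs.basis_exists[of C] by blast
  have spB: "vs.span B \<subseteq> C" using B(1) sub by (simp add: vs.span_minimal)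
  have inj: "inj_on f C"
  proof
    fix x y assume xy: "x \<in> C" "y \<in> C" "f x = f y"
    have "x - y \<in> C" using sub xy by (simp add: vs.subspace_diff)
    moreover have "\<forall>z\<in>Z. (x - y) z = 0" using xy(3) by (auto simp: f_def fun_eq_iff) metis
    ultimately have "x - y = 0" using H by blast
    then show "x = y" by simp
  qed
  have injB: "inj_on f (vs.span B)" using inj spB inj_on_subset by blast
  have indep: "vs.independent (f ` B)"
    using lf.dependent_inj_imageD[OF _ injB] B(2) by blast
  have cardfB: "card (f ` B) = card B"
    using card_image inj_on_subset[OF injB vs.span_superset] by blast
  define W where "W = (\<lambda>z. (\<lambda>i. if i = z then 1 else 0 :: 'a)) ` Z"
  have inW: "f x \<in> vs.span W" for x
  proof -
    have "f x = (\<Sum>z\<in>Z. fscale (x z) (\<lambda>i. if i = z then 1 else 0))"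
      using fin by (auto simp: fun_eq_iff f_def fscale_def sum_fun_apply if_distrib[of "(*) _"] cong: if_cong)
    also have "\<dots> \<in> vs.span W"
      by (intro vs.span_sum vs.span_scale vs.span_base) (auto simp: W_def)
    finally show ?thesis .
  qed
  have "finite (f ` B) \<and> card (f ` B) \<le> card W"
    using vs.independent_span_bound[of W "f ` B"] indep inW fin by (auto simp: W_def)
  moreover have "card W \<le> card Z" unfolding W_def using card_image_le fin by blast
  ultimately show False using cardfB B(4) dimC cZ by linarith
qed

lemma tensor_mem:
  assumes s1: "module.subspace fscale C1" and s2: "module.subspace fscale C2"
    and a: "a \<in> C1" and c: "c \<in> C1" and b: "b \<in> C2" and d: "d \<in> C2"
  shows "(\<lambda>p. s * a (fst p) * b (snd p) - t * c (fst p) * d (snd p)) \<in> tensor_code C1 C2"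
proof -
  interpret vs: vector_space "fscale :: 'a \<Rightarrow> (nat \<Rightarrow> 'a::field) \<Rightarrow> _" by (rule fscale_vs)
  have "(\<lambda>i. s * a i * b j - t * c i * d j) \<in> C1" for j
  proof -
    have "fscale (s * b j) a - fscale (t * d j) c \<in> C1"
      using s1 a c by (intro vs.subspace_diff vs.subspace_scale) auto
    moreover have "fscale (s * b j) a - fscale (t * d j) c = (\<lambda>i. s * a i * b j - t * c i * d j)"
      by (auto simp: fscale_def fun_eq_iff algebra_simps)
    ultimately show ?thesis by simp
  qed
  moreover have "(\<lambda>j. s * a i * b j - t * c i * d j) \<in> C2" for i
  proof -
    have "fscale (s * a i) b - fscale (t * c i) d \<in> C2"
      using s2 b d by (intro vs.subspace_diff vs.subspace_scale) auto
    moreover have "fscale (s * a i) b - fscale (t * c i) d = (\<lambda>j. s * a i * b j - t * c i * d j)"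
      by (auto simp: fscale_def fun_eq_iff algebra_simps)
    ultimately show ?thesis by simp
  qed
  ultimately show ?thesis by (simp add: tensor_code_def)
qed

lemma A: "(i::nat) \<in> {1..5} \<Longrightarrow> i = 1 \<or> i = 2 \<or> i = 3 \<or> i = 4 \<or> i = 5" by auto
lemma bad_pos: "p \<in> {1..5} \<times> {1..5} - E4 \<Longrightarrow>
  p \<in> {(1,1),(2,4),(2,5),(3,4),(3,5),(4,2),(4,3),(5,2),(5,3)}"
proof -
  obtain i j where p: "p = (i,j)" by (cases p)
  assume a: "p \<in> {1..5} \<times> {1..5} - E4"
  then have "i \<in> {1..5}" "j \<in> {1..5}" "(i,j) \<notin> E4" by (auto simp: p)
  then show ?thesis unfolding p E4_def
    apply -
    apply (drule A)+
    apply (elim disjE)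
    apply simp_all
    done
qed

lemma noncorr:
  fixes Ccol Crow :: "(nat \<Rightarrow> 'a::field) set"
  assumes L1: "lin_code 5 3 Ccol" and L2: "lin_code 5 3 Crow"
  shows "\<not> corrects 5 5 (tensor_code Ccol Crow) E4"
proof -
  interpret vs: vector_space "fscale :: 'a \<Rightarrow> (nat \<Rightarrow> 'a::field) \<Rightarrow> _" by (rule fscale_vs)
  have s1: "module.subspace fscale Ccol" and d1: "vector_space.dim fscale Ccol \<ge> 3"
    and z1: "\<And>x i. x \<in> Ccol \<Longrightarrow> i \<notin> {1..5} \<Longrightarrow> x i = 0"
    using L1 unfolding lin_code_def by blast+
  have s2: "module.subspace fscale Crow" and d2: "vector_space.dim fscale Crow \<ge> 3"
    and z2: "\<And>x i. x \<in> Crow \<Longrightarrow> i \<notin> {1..5} \<Longrightarrow> x i = 0"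
    using L2 unfolding lin_code_def by blast+
  have ex: "\<exists>X\<in>tensor_code Ccol Crow. X \<noteq> 0 \<and> (\<forall>p\<in>{1..5} \<times> {1..5} - E4. X p = 0)"
  proof (cases "\<exists>e\<in>Ccol. e \<noteq> 0 \<and> (\<forall>i. i \<noteq> 1 \<longrightarrow> e i = 0)")
    case True
    then obtain e where e: "e \<in> Ccol" "e \<noteq> 0" "\<And>i. i \<noteq> 1 \<Longrightarrow> e i = 0" by blast
    have e1: "e 1 \<noteq> 0" using e by (metis ext zero_fun_def)
    obtain q where q: "q \<in> Crow" "q \<noteq> 0" "q 1 = 0"
      using vanish[OF s2 d2, of "{1}"] by auto
    obtain j where j: "q j \<noteq> 0" using q(2) by (metis ext zero_fun_def)
    define X where "X = (\<lambda>p. 1 * e (fst p) * q (snd p) - 0 * e (fst p) * q (snd p))"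
    have "X \<in> tensor_code Ccol Crow" unfolding X_def by (rule tensor_mem[OF s1 s2 e(1) e(1) q(1) q(1)])
    moreover have "X (1, j) \<noteq> 0" using e1 j by (simp add: X_def)
    moreover have "\<forall>p\<in>{1..5} \<times> {1..5} - E4. X p = 0"
    proof
      fix p assume "p \<in> {1..5} \<times> {1..5} - E4"
      from bad_pos[OF this] show "X p = 0" using e(3) q(3) by (auto simp: X_def)
    qed
    ultimately show ?thesis by (metis zero_fun_def)
  next
    case False
    obtain a where a: "a \<in> Ccol" "a \<noteq> 0" "\<forall>z\<in>{4,5}. a z = 0"
      using vanish[OF s1 d1, of "{4,5}"] by auto
    obtain c where c: "c \<in> Ccol" "c \<noteq> 0" "\<forall>z\<in>{2,3}. c z = 0"
      using vanish[OF s1 d1, of "{2,3}"] by auto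
    obtain b where b: "b \<in> Crow" "b \<noteq> 0" "\<forall>z\<in>{4,5}. b z = 0"
      using vanish[OF s2 d2, of "{4,5}"] by auto
    obtain d where d: "d \<in> Crow" "d \<noteq> 0" "\<forall>z\<in>{2,3}. d z = 0"
      using vanish[OF s2 d2, of "{2,3}"] by auto
    obtain i where i: "i \<noteq> 1" "a i \<noteq> 0" using False a(1,2) by blast
    have i15: "i \<in> {1..5}" using z1[OF a(1), of i] i(2) by blast
    have "i \<noteq> 4" "i \<noteq> 5" using i(2) a(3) by auto
    then have i23: "i = 2 \<or> i = 3" using i15 i(1) by auto
    obtain i' where i': "c i' \<noteq> 0" using c(2) by (metis ext zero_fun_def)
    obtain j where j: "b j \<noteq> 0" using b(2) by (metis ext zero_fun_def)
    obtain j' where j': "d j' \<noteq> 0" using d(2) by (metis ext zero_fun_def)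
    have ai: "a 4 = 0" "a 5 = 0" "b 4 = 0" "b 5 = 0" "c 2 = 0" "c 3 = 0" "d 2 = 0" "d 3 = 0"
      using a(3) b(3) c(3) d(3) by auto
    show ?thesis
    proof (cases "a 1 * b 1 = 0")
      case True
      define X where "X = (\<lambda>p. 1 * a (fst p) * b (snd p) - 0 * a (fst p) * b (snd p))"
      have "X \<in> tensor_code Ccol Crow" unfolding X_def by (rule tensor_mem[OF s1 s2 a(1) a(1) b(1) b(1)])
      moreover have "X (i, j) \<noteq> 0" using i j by (simp add: X_def)
      moreover have "\<forall>p\<in>{1..5} \<times> {1..5} - E4. X p = 0"
      proof
        fix p assume "p \<in> {1..5} \<times> {1..5} - E4"
        from bad_pos[OF this] show "X p = 0" using ai True by (auto simp: X_def)
      qed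
      ultimately show ?thesis by (metis zero_fun_def)
    next
      case F1: False
      show ?thesis
      proof (cases "c 1 * d 1 = 0")
        case True
        define X where "X = (\<lambda>p. 1 * c (fst p) * d (snd p) - 0 * c (fst p) * d (snd p))"
        have "X \<in> tensor_code Ccol Crow" unfolding X_def by (rule tensor_mem[OF s1 s2 c(1) c(1) d(1) d(1)])
        moreover have "X (i', j') \<noteq> 0" using i' j' by (simp add: X_def)
        moreover have "\<forall>p\<in>{1..5} \<times> {1..5} - E4. X p = 0"
        proof
          fix p assume "p \<in> {1..5} \<times> {1..5} - E4"
          from bad_pos[OF this] show "X p = 0" using ai True by (auto simp: X_def)
        qed
        ultimately show ?thesis by (metis zero_fun_def)
      next
        case F2: False
        define X where "X = (\<lambda>p. (c 1 * d 1) * a (fst p) * b (snd p) - (a 1 * b 1) * c (fst p) * d (snd p))"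
        have "X \<in> tensor_code Ccol Crow" unfolding X_def by (rule tensor_mem[OF s1 s2 a(1) c(1) b(1) d(1)])
        moreover have "X (i, 1) \<noteq> 0" using i i23 F1 F2 ai by (auto simp: X_def)
        moreover have "\<forall>p\<in>{1..5} \<times> {1..5} - E4. X p = 0"
        proof
          fix p assume "p \<in> {1..5} \<times> {1..5} - E4"
          from bad_pos[OF this] show "X p = 0" using ai by (auto simp: X_def)
        qed
        ultimately show ?thesis by (metis zero_fun_def)
      qed
    qed
  qed
  then obtain X where X: "X \<in> tensor_code Ccol Crow" "X \<noteq> 0" "\<forall>p\<in>{1..5} \<times> {1..5} - E4. X p = 0"
    by blast
  have "(0::nat\<times>nat\<Rightarrow>'a) \<in> tensor_code Ccol Crow"
    using vs.subspace_0[OF s1] vs.subspace_0[OF s2] by (simp add: tensor_code_def zero_fun_def)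
  then have "(\<forall>p\<in>{1..5} \<times> {1..5} - E4. X p = (0::nat\<times>nat\<Rightarrow>'a) p) \<longrightarrow> X = 0"
    if "corrects 5 5 (tensor_code Ccol Crow) E4" using that X(1) unfolding corrects_def by blast
  then show ?thesis using X(2,3) by auto
qed

lemma R: "\<forall>U\<in>Pow (set [1,2,3,4,5::nat]). \<forall>V\<in>Pow (set [1,2,3,4,5::nat]). 2 \<le> card U \<longrightarrow> 2 \<le> card V \<longrightarrow> int (card (E4 \<inter> (U \<times> V))) \<le> int (card V * 2 + card U * 2) - int (2*2)"
  by code_simp

lemma reg: "regular 5 5 2 2 E4"
proof -
  have e: "{1..5::nat} = set [1,2,3,4,5]" by auto
  show ?thesis unfolding regular_def e using R by blast
qed

theorem lemma4:
  shows "regular 5 5 2 2 E4 \<and> \<not> correctable_over TYPE('a::{field,finite}) 5 5 2 2 E4"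
proof
  show "regular 5 5 2 2 E4" by (rule reg)
  show "\<not> correctable_over TYPE('a::{field,finite}) 5 5 2 2 E4"
    unfolding correctable_over_def using noncorr by fastforce
qed

end
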